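(* Consider the family of distributions on $[0,1]$ with densities, with respect to the measure $\lambda+\delta_0+\delta_1$ (where $\lambda$ is Lebesgue measure and $\delta_c$ is the point mass at $c$), $$\mathrm{beinf}(y;\alpha,\gamma,\mu,\phi)=\begin{cases}\alpha(1-\gamma), & y=0,\\ \alpha\gamma, & y=1,\\ (1-\alpha)f(y;\mu,\phi), & y\in(0,1),\end{cases}$$ indexed by $(\alpha,\gamma,\mu,\phi)\in(0,1)\times(0,1)\times(0,1)\times(0,\infty)$, where $$f(y;\mu,\phi)=\frac{\Gamma(\phi)}{\Gamma(\mu\phi)\Gamma((1-\mu)\phi)}\,y^{\mu\phi-1}(1-y)^{(1-\mu)\phi-1},\quad y\in(0,1),$$ is the beta density with mean $\mu$ and precision $\phi$ (the zero-and-one-inflated beta distribution $\mathrm{BEINF}(\alpha,\gamma,\mu,\phi)$). Then this family is a four-parameter exponential family of full rank.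
   Context: A family of densities $\{p_\theta:\theta\in\Theta\}$ with respect to a measure $\nu$ on a space $\mathcal Y$ is called a $k$-parameter exponential family of full rank if there are a one-to-one map $\theta\mapsto\eta(\theta)\in\mathbb R^k$, a statistic $T=(t_1,\dots,t_k):\mathcal Y\to\mathbb R^k$, a real function $B^*$ and a positive function $h$ on $\mathcal Y$ such that $p_\theta(y)=\exp\{\eta(\theta)^\top T(y)-B^*(\eta(\theta))\}h(y)$ for all $y$ and $\theta$, where neither the components $t_1,\dots,t_k$ nor the components of $\eta$ satisfy a linear constraint, and the set $\{\eta(\theta):\theta\in\Theta\}$ contains a $k$-dimensional open rectangle. *)

theory Defs
  imports "HOL-Probability.Probability" "HOL-Library.Numeral_Type"
begin

definition nu_beinf :: "real measure" where
  "nu_beinf = measure_of {0..1} (sets (restrict_space lborel {0..1}))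
     (\<lambda>A. emeasure lborel A + indicator A 0 + indicator A 1)"

definition beta_mp_density :: "real \<Rightarrow> real \<Rightarrow> real \<Rightarrow> real" where
  "beta_mp_density mu phi y =
     Gamma phi / (Gamma (mu * phi) * Gamma ((1 - mu) * phi))
       * y powr (mu * phi - 1) * (1 - y) powr ((1 - mu) * phi - 1)"

definition beinf :: "real \<times> real \<times> real \<times> real \<Rightarrow> real \<Rightarrow> real" where
  "beinf \<theta> y = (case \<theta> of (\<alpha>, \<gamma>, \<mu>, \<phi>) \<Rightarrow>
     (if y = 0 then \<alpha> * (1 - \<gamma>)
      else if y = 1 then \<alpha> * \<gamma>
      else (1 - \<alpha>) * beta_mp_density \<mu> \<phi> y))"

definition beinf_params :: "(real \<times> real \<times> real \<times> real) set" where
  "beinf_params = {0<..<1} \<times> {0<..<1} \<times> {0<..<1} \<times> {0<..}"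

text \<open>k-parameter exponential family of full rank, k = CARD('n).
  Linear constraints are affine relations c . v = d with c \<noteq> 0; for T they
  are required to fail nu-almost everywhere (the standard reading).\<close>
definition exp_family_full_rank ::
  "'y measure \<Rightarrow> 'a set \<Rightarrow> ('a \<Rightarrow> 'y \<Rightarrow> real) \<Rightarrow> 'n::finite itself \<Rightarrow> bool" where
  "exp_family_full_rank \<nu> \<Theta> p _ \<longleftrightarrow>
    (\<exists>(\<eta> :: 'a \<Rightarrow> real^'n) (T :: 'y \<Rightarrow> real^'n) (B :: real^'n \<Rightarrow> real) (h :: 'y \<Rightarrow> real).
       inj_on \<eta> \<Theta> \<and>
       (\<forall>y\<in>space \<nu>. h y > 0) \<and>
       (\<forall>\<theta>\<in>\<Theta>. \<forall>y\<in>space \<nu>. p \<theta> y = exp (\<eta> \<theta> \<bullet> T y - B (\<eta> \<theta>)) * h y) \<and>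
       \<not> (\<exists>c d. c \<noteq> 0 \<and> (AE y in \<nu>. c \<bullet> T y = d)) \<and>
       \<not> (\<exists>c d. c \<noteq> 0 \<and> (\<forall>\<theta>\<in>\<Theta>. c \<bullet> \<eta> \<theta> = d)) \<and>
       (\<exists>a b. (\<forall>i. a $ i < b $ i) \<and> box a b \<subseteq> \<eta> ` \<Theta>))"

end

theory Submission imports Defs begin
lemma M_iff: "A \<in> sets (restrict_space lborel {0..1::real}) \<longleftrightarrow> A \<subseteq> {0..1} \<and> A \<in> sets borel"
  by (subst sets_restrict_space_iff) auto

lemma ca: "countably_additive (sets (restrict_space lborel {0..1::real}))
     (\<lambda>A. emeasure lborel A + indicator A 0 + indicator A 1)"
  unfolding countably_additive_def
proof (intro allI impI)
  fix A :: "nat \<Rightarrow> real set"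
  assume r: "range A \<subseteq> sets (restrict_space lborel {0..1})" and d: "disjoint_family A"
    and u: "\<Union> (range A) \<in> sets (restrict_space lborel {0..1})"
  have rb: "range A \<subseteq> sets lborel" using r M_iff by auto
  have "(\<Sum>i. emeasure lborel (A i) + indicator (A i) 0 + indicator (A i) (1::real)) =
     (\<Sum>i. emeasure lborel (A i)) + (\<Sum>i. indicator (A i) 0) + (\<Sum>i. indicator (A i) (1::real) :: ennreal)"
    by (simp add: suminf_add[symmetric])
  also have "\<dots> = emeasure lborel (\<Union> (range A)) + indicator (\<Union> (range A)) 0 + indicator (\<Union> (range A)) 1"
    using suminf_indicator[OF d] suminf_emeasure[OF rb d] by simp
  finally show "(\<Sum>i. emeasure lborel (A i) + indicator (A i) 0 + indicator (A i) 1) =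
     emeasure lborel (\<Union> (range A)) + indicator (\<Union> (range A)) 0 + indicator (\<Union> (range A)) (1::real)" .
qed

lemma nu_space: "space nu_beinf = {0..1}"
  unfolding nu_beinf_def by (subst space_measure_of) (auto simp: M_iff subset_eq)

lemma nu_emeasure: assumes "A \<in> sets (restrict_space lborel {0..1::real})"
  shows "emeasure nu_beinf A = emeasure lborel A + indicator A 0 + indicator A 1"
  unfolding nu_beinf_def
proof (rule emeasure_measure_of_sigma[OF _ _ ca assms])
  show "sigma_algebra {0..1::real} (sets (restrict_space lborel {0..1}))"
    using sets.sigma_algebra_axioms[of "restrict_space lborel {0..1::real}"] by (simp add: space_restrict_space)
  show "positive (sets (restrict_space lborel {0..1::real})) (\<lambda>A. emeasure lborel A + indicator A 0 + indicator A 1)"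
    by (simp add: positive_def)
qed

lemma nu_sets: "sets nu_beinf = sets (restrict_space lborel {0..1::real})"
  unfolding nu_beinf_def
  apply (subst sets_measure_of)
  apply (auto simp: M_iff subset_eq)[1]
  using sigma_algebra.sigma_sets_eq[OF sets.sigma_algebra_axioms[of "restrict_space lborel {0..1::real}"]]
  by (simp add: space_restrict_space)
lemma vector_4 [simp]:
 "(vector [x,y,z,w] ::('a::zero)^4)$1 = x"
 "(vector [x,y,z,w] ::('a::zero)^4)$2 = y"
 "(vector [x,y,z,w] ::('a::zero)^4)$3 = z"
 "(vector [x,y,z,w] ::('a::zero)^4)$4 = w"
  unfolding vector_def by simp_all

lemma inner4: "(x::real^4) \<bullet> y = x$1*y$1 + x$2*y$2 + x$3*y$3 + x$4*y$4"
  by (simp add: inner_vec_def sum_4)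

definition Cc :: "real \<Rightarrow> real \<Rightarrow> real" where
  "Cc mu phi = Gamma phi / (Gamma (mu * phi) * Gamma ((1 - mu) * phi))"

lemma Cc_pos: "0 < mu \<Longrightarrow> mu < 1 \<Longrightarrow> 0 < phi \<Longrightarrow> Cc mu phi > 0"
  unfolding Cc_def by (intro divide_pos_pos mult_pos_pos Gamma_real_pos) auto

definition etaf :: "real \<times> real \<times> real \<times> real \<Rightarrow> real^4" where
  "etaf \<theta> = (case \<theta> of (a, g, m, p) \<Rightarrow>
     vector [ln (a / (1 - a) * (1 - g) / Cc m p), ln (a / (1 - a) * g / Cc m p), m * p, (1 - m) * p])"

definition Kf :: "real \<times> real \<times> real \<times> real \<Rightarrow> real" where
  "Kf \<theta> = (case \<theta> of (a, g, m, p) \<Rightarrow> ln ((1 - a) * Cc m p))"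

definition Tf :: "real \<Rightarrow> real^4" where
  "Tf y = vector [if y = 0 then 1 else 0, if y = 1 then 1 else 0,
     if 0 < y \<and> y < 1 then ln y else 0, if 0 < y \<and> y < 1 then ln (1 - y) else 0]"

definition hf :: "real \<Rightarrow> real" where
  "hf y = (if 0 < y \<and> y < 1 then 1 / (y * (1 - y)) else 1)"

lemma density:
  assumes "\<theta> \<in> beinf_params" "y \<in> {0..1}"
  shows "beinf \<theta> y = exp (etaf \<theta> \<bullet> Tf y + Kf \<theta>) * hf y"
proof -
  obtain a g m p where th: "\<theta> = (a, g, m, p)" by (cases \<theta>) auto
  have pa: "0 < a" "a < 1" "0 < g" "g < 1" "0 < m" "m < 1" "0 < p"
    using assms(1) by (auto simp: th beinf_params_def)
  have C: "Cc m p > 0" using Cc_pos pa by auto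
  have eK: "exp (Kf \<theta>) = (1 - a) * Cc m p" using pa C by (simp add: th Kf_def)
  consider "y = 0" | "y = 1" | "0 < y \<and> y < 1" using assms(2) by force
  then show ?thesis
  proof cases
    case 1
    have "exp (etaf \<theta> \<bullet> Tf y + Kf \<theta>) = exp (etaf \<theta> $ 1) * exp (Kf \<theta>)"
      by (simp add: 1 inner4 Tf_def exp_add)
    also have "exp (etaf \<theta> $ 1) = a / (1 - a) * (1 - g) / Cc m p"
      using pa C by (simp add: th etaf_def)
    finally show ?thesis using pa C eK by (simp add: 1 hf_def beinf_def th)
  next
    case 2
    have "exp (etaf \<theta> \<bullet> Tf y + Kf \<theta>) = exp (etaf \<theta> $ 2) * exp (Kf \<theta>)"
      by (simp add: 2 inner4 Tf_def exp_add)
    also have "exp (etaf \<theta> $ 2) = a / (1 - a) * g / Cc m p"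
      using pa C by (simp add: th etaf_def)
    finally show ?thesis using pa C eK by (simp add: 2 hf_def beinf_def th)
  next
    case 3
    have "exp (etaf \<theta> \<bullet> Tf y + Kf \<theta>) * hf y =
       exp (m * p * ln y + (1 - m) * p * ln (1 - y) + Kf \<theta> - ln y - ln (1 - y))"
      using 3 by (simp add: inner4 Tf_def hf_def th etaf_def exp_add exp_diff)
    also have "\<dots> = exp (Kf \<theta>) * (exp ((m * p - 1) * ln y) * exp (((1 - m) * p - 1) * ln (1 - y)))"
      by (simp add: exp_add[symmetric] algebra_simps)
    also have "\<dots> = beinf \<theta> y"
      using 3 pa unfolding eK by (simp add: beinf_def th beta_mp_density_def Cc_def powr_def)
    finally show ?thesis by simp
  qed
qed

lemma eta_inj: "inj_on etaf beinf_params"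
proof (rule inj_onI)
  fix x y assume x: "x \<in> beinf_params" and y: "y \<in> beinf_params" and e: "etaf x = etaf y"
  obtain a g m p where th: "x = (a, g, m, p)" by (cases x) auto
  obtain a' g' m' p' where th': "y = (a', g', m', p')" by (cases y) auto
  have pa: "0 < a" "a < 1" "0 < g" "g < 1" "0 < m" "m < 1" "0 < p"
    using x by (auto simp: th beinf_params_def)
  have pa': "0 < a'" "a' < 1" "0 < g'" "g' < 1" "0 < m'" "m' < 1" "0 < p'"
    using y by (auto simp: th' beinf_params_def)
  have e3: "m * p = m' * p'" using arg_cong[OF e, of "\<lambda>v. v$3"] by (simp add: th th' etaf_def)
  have e4: "(1 - m) * p = (1 - m') * p'" using arg_cong[OF e, of "\<lambda>v. v$4"] by (simp add: th th' etaf_def)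
  have pp: "p = p'" using e3 e4 by (simp add: algebra_simps)
  have mm: "m = m'" using e3 pp pa by simp
  have C: "Cc m p > 0" using Cc_pos pa by auto
  have e1: "a / (1 - a) * (1 - g) / Cc m p = a' / (1 - a') * (1 - g') / Cc m p"
    using arg_cong[OF e, of "\<lambda>v. v$1"] pa pa' C by (simp add: th th' etaf_def pp mm)
  have e2: "a / (1 - a) * g / Cc m p = a' / (1 - a') * g' / Cc m p"
    using arg_cong[OF e, of "\<lambda>v. v$2"] pa pa' C by (simp add: th th' etaf_def pp mm)
  have f1: "a / (1 - a) * (1 - g) = a' / (1 - a') * (1 - g')" using arg_cong[OF e1, of "\<lambda>z. z * Cc m p"] C by simp
  have f2: "a / (1 - a) * g = a' / (1 - a') * g'" using arg_cong[OF e2, of "\<lambda>z. z * Cc m p"] C by simp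
  have r: "a / (1 - a) = a' / (1 - a')"
  proof -
    have "a / (1 - a) = a / (1 - a) * (1 - g) + a / (1 - a) * g" by (simp add: ring_distribs)
    also have "\<dots> = a' / (1 - a') * (1 - g') + a' / (1 - a') * g'" using f1 f2 by simp
    also have "\<dots> = a' / (1 - a')" by (simp add: ring_distribs)
    finally show ?thesis .
  qed
  have aa: "a = a'" using r pa pa' by (simp add: field_simps) 
  have gg: "g = g'" using f2 aa pa by simp
  show "x = y" using aa gg mm pp th th' by simp
qed

lemma eta_surj:
  fixes v :: "real^4" assumes "v$3 > 0" "v$4 > 0"
  shows "v \<in> etaf ` beinf_params"
proof -
  define p where "p = v$3 + v$4"
  define m where "m = v$3 / p"
  have pa: "0 < p" "0 < m" "m < 1" using assms by (auto simp: p_def m_def field_simps)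
  define C where "C = Cc m p"
  have C: "C > 0" using Cc_pos pa by (auto simp: C_def)
  define s where "s = (exp (v$1) + exp (v$2)) * C"
  have s: "s > 0" using C by (simp add: s_def add_pos_pos)
  define a where "a = s / (1 + s)"
  define g where "g = exp (v$2) / (exp (v$1) + exp (v$2))"
  have g0: "0 < g" by (simp add: g_def add_pos_pos)
  have g1: "g < 1"
  proof -
    have "0 < exp (v$1)" "0 < exp (v$2)" by auto
    then show ?thesis by (simp add: g_def divide_less_eq not_less)
  qed
  have pa2: "0 < a" "a < 1" "0 < g" "g < 1" using s g0 g1 by (auto simp: a_def)
  have as: "a / (1 - a) = s" using s by (simp add: a_def field_simps)
  have "etaf (a, g, m, p) = v"
  proof -
    have sp: "exp (v$1) + exp (v$2) > 0" by (simp add: add_pos_pos)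
    have 1: "a / (1 - a) * (1 - g) / C = exp (v$1)"
    proof -
      have ne: "exp (v$1) + exp (v$2) \<noteq> 0" using sp by linarith
      have omg: "1 - g = exp (v$1) / (exp (v$1) + exp (v$2))" using ne by (simp add: g_def field_simps)
      show ?thesis unfolding as s_def omg using C ne by simp
    qed
    have 2: "a / (1 - a) * g / C = exp (v$2)"
    proof -
      have ne: "exp (v$1) + exp (v$2) \<noteq> 0" using sp by linarith
      show ?thesis unfolding as s_def g_def using C ne by simp
    qed
    have 3: "m * p = v$3" using pa by (simp add: m_def)
    have 4: "(1 - m) * p = v$4" using pa by (simp add: m_def p_def field_simps)
    show ?thesis unfolding vec_eq_iff forall_4 etaf_def using 1 2 3 4
      by (simp add: C_def)
  qed
  moreover have "(a, g, m, p) \<in> beinf_params" using pa pa2 by (simp add: beinf_params_def)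
  ultimately show ?thesis by force
qed

lemma ln_facts: "ln (1/2::real) = - ln 2" "ln (1/4::real) = - 2 * ln 2" "ln (3/4::real) = ln 3 - 2 * ln 2"
  "ln (3::real) > 0" "ln (3::real) \<noteq> 2 * ln 2"
proof -
  have l4: "ln (4::real) = 2 * ln 2" using ln_realpow[of 2 2] by simp
  show "ln (1/2::real) = - ln 2" by (simp add: ln_div)
  show "ln (1/4::real) = - 2 * ln 2" using l4 by (simp add: ln_div)
  show "ln (3/4::real) = ln 3 - 2 * ln 2" using l4 by (simp add: ln_div)
  show "ln (3::real) > 0" by simp
  have "ln (3::real) < ln 4" by simp
  then show "ln (3::real) \<noteq> 2 * ln 2" using l4 by simp
qed

lemma T_no_rel: "\<not> (\<exists>c d. c \<noteq> 0 \<and> (AE y in nu_beinf. c \<bullet> Tf y = d))"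
proof
  assume "\<exists>c d. c \<noteq> 0 \<and> (AE y in nu_beinf. c \<bullet> Tf y = d)"
  then obtain c d where c: "c \<noteq> 0" and ae: "AE y in nu_beinf. c \<bullet> Tf y = d" by blast
  from ae obtain N where N: "{y \<in> space nu_beinf. \<not> c \<bullet> Tf y = d} \<subseteq> N"
    "emeasure nu_beinf N = 0" "N \<in> sets nu_beinf" by (rule AE_E)
  have NM: "N \<in> sets (restrict_space lborel {0..1::real})" using N(3) nu_sets by simp
  have sum0: "emeasure lborel N + indicator N 0 + indicator N 1 = 0"
    using N(2) nu_emeasure[OF NM] by simp
  have n0: "0 \<notin> N" and n1: "1 \<notin> N" and lN: "emeasure lborel N = 0"
    using sum0 by (auto simp: indicator_def split: if_splits)
  have NB: "N \<in> sets borel" using NM M_iff by auto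
  have d1: "c$1 = d" using N(1) n0 by (auto simp: nu_space Tf_def inner4)
  have "(1::real) \<notin> {y \<in> space nu_beinf. \<not> c \<bullet> Tf y = d}" using N(1) n1 by blast
  then have d2: "c$2 = d" by (simp add: nu_space Tf_def inner4)
  have key: "c$3 * ln y + c$4 * ln (1 - y) = d" if y: "0 < y" "y < 1" for y
  proof (rule ccontr)
    assume ne: "c$3 * ln y + c$4 * ln (1 - y) \<noteq> d"
    have "continuous (at y) (\<lambda>z. c$3 * ln z + c$4 * ln (1 - z))"
      using y by (intro continuous_intros) auto
    from continuous_at_avoid[OF this ne] obtain e where e: "e > 0"
      "\<And>z. dist y z < e \<Longrightarrow> c$3 * ln z + c$4 * ln (1 - z) \<noteq> d" by blast
    define r where "r = min e (min y (1 - y))"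
    have r: "r > 0" "r \<le> e" "r \<le> y" "r \<le> 1 - y" using e y by (auto simp: r_def)
    have sub: "{y - r <..< y + r} \<subseteq> N"
    proof
      fix z assume z: "z \<in> {y - r <..< y + r}"
      have z01: "0 < z" "z < 1" using z r by auto
      have "dist y z < e" using z r by (auto simp: dist_real_def)
      then have "c$3 * ln z + c$4 * ln (1 - z) \<noteq> d" by (rule e(2))
      then have "z \<in> {y \<in> space nu_beinf. \<not> c \<bullet> Tf y = d}"
        using z01 by (auto simp: nu_space Tf_def inner4)
      then show "z \<in> N" using N(1) by blast
    qed
    have "emeasure lborel {y - r <..< y + r} \<le> emeasure lborel N"
      using sub NB by (intro emeasure_mono) auto
    then have "ennreal (2 * r) \<le> 0" using lN r by simp
    then show False using r by simp
  qed
  have a: "c$3 * ln (1/2) + c$4 * ln (1 - 1/2) = d" by (rule key) auto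
  have b: "c$3 * ln (1/4) + c$4 * ln (1 - 1/4) = d" by (rule key) auto
  have cc: "c$3 * ln (3/4) + c$4 * ln (1 - 3/4) = d" by (rule key) auto
  have a': "- (c$3 + c$4) * ln 2 = d" using a by (simp add: ln_facts algebra_simps)
  have b': "- 2 * c$3 * ln 2 + c$4 * (ln 3 - 2 * ln 2) = d" using b by (simp add: ln_facts algebra_simps)
  have c': "c$3 * (ln 3 - 2 * ln 2) - 2 * c$4 * ln 2 = d" using cc by (simp add: ln_facts algebra_simps)
  have "(c$4 - c$3) * ln 3 = 0" using b' c' by (simp add: algebra_simps)
  then have 34: "c$3 = c$4" using ln_facts(4) by simp
  have "c$3 * (ln 3 - 2 * ln 2) = 0" using a' b' 34 by (simp add: algebra_simps)
  then have z3: "c$3 = 0" using ln_facts(5) by simp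
  have dz: "d = 0" using a' z3 34 by simp
  have "c = 0" unfolding vec_eq_iff forall_4 using d1 d2 dz z3 34 by simp
  with c show False by simp
qed

lemma eta_no_rel: "\<not> (\<exists>c d. c \<noteq> 0 \<and> (\<forall>\<theta>\<in>beinf_params. c \<bullet> etaf \<theta> = d))"
proof
  assume "\<exists>c d. c \<noteq> 0 \<and> (\<forall>\<theta>\<in>beinf_params. c \<bullet> etaf \<theta> = d)"
  then obtain c d where c: "c \<noteq> 0" and r: "\<forall>\<theta>\<in>beinf_params. c \<bullet> etaf \<theta> = d" by blast
  have R: "c \<bullet> v = d" if "v$3 > 0" "v$4 > 0" for v :: "real^4"
    using eta_surj[OF that] r by blast
  have p0: "c \<bullet> (vector [0,0,1,1] :: real^4) = d" by (rule R) auto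
  have p1: "c \<bullet> (vector [1,0,1,1] :: real^4) = d" by (rule R) auto
  have p2: "c \<bullet> (vector [0,1,1,1] :: real^4) = d" by (rule R) auto
  have p3: "c \<bullet> (vector [0,0,2,1] :: real^4) = d" by (rule R) auto
  have p4: "c \<bullet> (vector [0,0,1,2] :: real^4) = d" by (rule R) auto
  have "c = 0" unfolding vec_eq_iff forall_4 using p0 p1 p2 p3 p4 by (simp add: inner4)
  with c show False by simp
qed

lemma eta_box: "\<exists>a b. (\<forall>i. a $ i < b $ i) \<and> box a b \<subseteq> etaf ` beinf_params"
proof (intro exI conjI)
  show "\<forall>i. (vector [0,0,1,1] :: real^4) $ i < (vector [1,1,2,2] :: real^4) $ i"
    by (simp add: forall_4)
  show "box (vector [0,0,1,1] :: real^4) (vector [1,1,2,2]) \<subseteq> etaf ` beinf_params"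
  proof
    fix x :: "real^4" assume "x \<in> box (vector [0,0,1,1]) (vector [1,1,2,2])"
    then have "x$3 > 1" "x$4 > 1" by (auto simp: mem_box_cart forall_4)
    then show "x \<in> etaf ` beinf_params" by (intro eta_surj) auto
  qed
qed

theorem proposition2:
  shows "exp_family_full_rank nu_beinf beinf_params beinf TYPE(4)"
  unfolding exp_family_full_rank_def
proof (intro exI[of _ etaf] exI[of _ Tf] exI[of _ "\<lambda>v. - Kf (inv_into beinf_params etaf v)"] exI[of _ hf] conjI)
  show "inj_on etaf beinf_params" by (rule eta_inj)
  show "\<forall>y\<in>space nu_beinf. hf y > 0" by (auto simp: hf_def)
  show "\<forall>\<theta>\<in>beinf_params. \<forall>y\<in>space nu_beinf. beinf \<theta> y =
      exp (etaf \<theta> \<bullet> Tf y - (\<lambda>v. - Kf (inv_into beinf_params etaf v)) (etaf \<theta>)) * hf y"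
    using density by (simp add: nu_space inv_into_f_f[OF eta_inj])
  show "\<not> (\<exists>c d. c \<noteq> 0 \<and> (AE y in nu_beinf. c \<bullet> Tf y = d))" by (rule T_no_rel)
  show "\<not> (\<exists>c d. c \<noteq> 0 \<and> (\<forall>\<theta>\<in>beinf_params. c \<bullet> etaf \<theta> = d))" by (rule eta_no_rel)
  show "\<exists>a b. (\<forall>i. a $ i < b $ i) \<and> box a b \<subseteq> etaf ` beinf_params" by (rule eta_box)
qed

end
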